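(* Let $m \in \mathbb N$ and $X, Y, Z \in M_m$. Then $\cos\varphi\, X + \sin\varphi\, Y + Z \in \mathcal U_m$ for all $\varphi \in \mathbb R$ if and only if $$|X|^2 = |Y|^2 = I_m - |Z|^2 \quad\text{and}\quad \operatorname{Re}(X^\ast Y) = \operatorname{Re}(X^\ast Z) = \operatorname{Re}(Y^\ast Z) = 0_m.$$
   Context: $M_m$ is the set of $m\times m$ complex matrices and $\mathcal U_m$ the unitary ones. For $A \in M_m$, $\operatorname{Re}A = \tfrac12(A + A^\ast)$ and $|A| = (A^\ast A)^{1/2}$, so $|A|^2 = A^\ast A$. *)

theory Defs
  imports "Jordan_Normal_Form.Matrix"
begin

definition adj :: "complex mat \<Rightarrow> complex mat" where
  "adj A = mat (dim_col A) (dim_row A) (\<lambda>(i,j). cnj (A $$ (j,i)))"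

definition mat_Re :: "complex mat \<Rightarrow> complex mat" where
  "mat_Re A = (1/2 :: complex) \<cdot>\<^sub>m (A + adj A)"

definition unitary :: "nat \<Rightarrow> complex mat \<Rightarrow> bool" where
  "unitary m U \<longleftrightarrow> U \<in> carrier_mat m m \<and> adj U * U = 1\<^sub>m m \<and> U * adj U = 1\<^sub>m m"

end

theory Submission
  imports Defs "Jordan_Normal_Form.Determinant"
begin

definition G :: "nat \<Rightarrow> complex mat \<Rightarrow> complex mat \<Rightarrow> nat \<Rightarrow> nat \<Rightarrow> complex" where
  "G m X Y i j = (\<Sum>k<m. cnj (X $$ (k,i)) * Y $$ (k,j))"

lemma adj_carrier: "X \<in> carrier_mat m m \<Longrightarrow> adj X \<in> carrier_mat m m"
  by (metis carrier_matD(1) carrier_matD(2) adj_def mat_carrier)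

lemma adj_mult_idx:
  assumes "X \<in> carrier_mat m m" "Y \<in> carrier_mat m m" "i < m" "j < m"
  shows "(adj X * Y) $$ (i,j) = G m X Y i j"
proof -
  have d: "dim_row X = m" "dim_col X = m" "dim_row Y = m" "dim_col Y = m" using assms(1,2) by auto
  show ?thesis using assms(3,4) unfolding G_def adj_def by (simp add: d scalar_prod_def atLeast0LessThan)
qed

lemma adj_idx: "i < dim_col M \<Longrightarrow> j < dim_row M \<Longrightarrow> adj M $$ (i,j) = cnj (M $$ (j,i))"
  "dim_row (adj M) = dim_col M" "dim_col (adj M) = dim_row M"
  by (simp_all add: adj_def)

lemma mat_Re_idx:
  assumes "X \<in> carrier_mat m m" "Y \<in> carrier_mat m m" "i < m" "j < m"
  shows "mat_Re (adj X * Y) $$ (i,j) = (G m X Y i j + G m Y X i j) / 2"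
proof -
  define M where "M = adj X * Y"
  have Mc: "M \<in> carrier_mat m m" unfolding M_def using adj_carrier[OF assms(1)] assms(2) by simp
  have dM: "dim_row M = m" "dim_col M = m" using Mc by auto
  have c: "cnj (G m X Y j i) = G m Y X i j"
    unfolding G_def by (simp add: mult.commute)
  have "adj M $$ (i,j) = G m Y X i j"
    using assms(3,4) by (simp add: adj_idx dM M_def[symmetric] adj_mult_idx[OF assms(1,2) assms(4,3), folded M_def] c)
  moreover have "M $$ (i,j) = G m X Y i j" using adj_mult_idx[OF assms] M_def by simp
  moreover have "mat_Re M $$ (i,j) = (1/2) * (M $$ (i,j) + adj M $$ (i,j))"
    using assms(3,4) by (simp add: mat_Re_def adj_idx dM)
  ultimately show ?thesis unfolding M_def by simp
qed

lemma expand: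
  fixes a b :: real and x y z x' y' z' :: complex
  shows "cnj (complex_of_real a * x + complex_of_real b * y + z) * (complex_of_real a * x' + complex_of_real b * y' + z')
   = complex_of_real (a*a) * (cnj x * x') + complex_of_real (b*b) * (cnj y * y') + cnj z * z'
     + complex_of_real (a*b) * (cnj x * y' + cnj y * x')
     + complex_of_real a * (cnj x * z' + cnj z * x')
     + complex_of_real b * (cnj y * z' + cnj z * y')"
  by (simp add: algebra_simps)

lemma U_idx:
  fixes a b :: real
  assumes "X \<in> carrier_mat m m" "Y \<in> carrier_mat m m" "Z \<in> carrier_mat m m" "i < m" "j < m"
  defines "U \<equiv> complex_of_real a \<cdot>\<^sub>m X + complex_of_real b \<cdot>\<^sub>m Y + Z"
  shows "(adj U * U) $$ (i,j) =
     complex_of_real (a*a) * G m X X i j + complex_of_real (b*b) * G m Y Y i j + G m Z Z i j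
     + complex_of_real (a*b) * (G m X Y i j + G m Y X i j)
     + complex_of_real a * (G m X Z i j + G m Z X i j)
     + complex_of_real b * (G m Y Z i j + G m Z Y i j)" (is "_ = ?rhs")
proof -
  have U: "U \<in> carrier_mat m m" using assms(1-3) unfolding U_def by simp
  have dX: "dim_row X = m" "dim_col X = m" "dim_row Y = m" "dim_col Y = m" "dim_row Z = m" "dim_col Z = m"
    using assms(1-3) by auto
  have "(adj U * U) $$ (i,j) = G m U U i j" using adj_mult_idx[OF U U assms(4,5)] .
  also have "\<dots> = (\<Sum>k<m. complex_of_real (a*a) * (cnj (X $$ (k,i)) * X $$ (k,j))
      + complex_of_real (b*b) * (cnj (Y $$ (k,i)) * Y $$ (k,j)) + cnj (Z $$ (k,i)) * Z $$ (k,j)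
      + complex_of_real (a*b) * (cnj (X $$ (k,i)) * Y $$ (k,j) + cnj (Y $$ (k,i)) * X $$ (k,j))
      + complex_of_real a * (cnj (X $$ (k,i)) * Z $$ (k,j) + cnj (Z $$ (k,i)) * X $$ (k,j))
      + complex_of_real b * (cnj (Y $$ (k,i)) * Z $$ (k,j) + cnj (Z $$ (k,i)) * Y $$ (k,j)))"
    unfolding G_def
  proof (rule sum.cong[OF refl])
    fix k assume "k \<in> {..<m}"
    then have k: "k < m" by simp
    have e1: "U $$ (k,i) = complex_of_real a * X $$ (k,i) + complex_of_real b * Y $$ (k,i) + Z $$ (k,i)"
      "U $$ (k,j) = complex_of_real a * X $$ (k,j) + complex_of_real b * Y $$ (k,j) + Z $$ (k,j)"
      using assms(4,5) k unfolding U_def by (simp_all add: dX)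
    show "cnj (U $$ (k, i)) * U $$ (k, j) = complex_of_real (a*a) * (cnj (X $$ (k,i)) * X $$ (k,j))
      + complex_of_real (b*b) * (cnj (Y $$ (k,i)) * Y $$ (k,j)) + cnj (Z $$ (k,i)) * Z $$ (k,j)
      + complex_of_real (a*b) * (cnj (X $$ (k,i)) * Y $$ (k,j) + cnj (Y $$ (k,i)) * X $$ (k,j))
      + complex_of_real a * (cnj (X $$ (k,i)) * Z $$ (k,j) + cnj (Z $$ (k,i)) * X $$ (k,j))
      + complex_of_real b * (cnj (Y $$ (k,i)) * Z $$ (k,j) + cnj (Z $$ (k,i)) * Y $$ (k,j))"
      unfolding e1 by (rule expand)
  qed
  also have "\<dots> = ?rhs"
    unfolding G_def by (simp only: sum_distrib_left sum.distrib distrib_left)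
  finally show ?thesis .
qed

lemma scalar_lemma:
  fixes A B C R P Q d :: complex
  shows "(\<forall>\<phi>::real. complex_of_real (cos \<phi> * cos \<phi>) * A + complex_of_real (sin \<phi> * sin \<phi>) * B + C
     + complex_of_real (cos \<phi> * sin \<phi>) * R + complex_of_real (cos \<phi>) * P + complex_of_real (sin \<phi>) * Q = d)
   \<longleftrightarrow> (A = B \<and> B = d - C \<and> R = 0 \<and> P = 0 \<and> Q = 0)" (is "(\<forall>\<phi>. ?E \<phi>) \<longleftrightarrow> _")
proof
  assume H: "\<forall>\<phi>. ?E \<phi>"
  have e1: "A + C + P = d" using H[rule_format, of 0] by simp
  have e2: "A + C - P = d" using H[rule_format, of pi] by simp
  have e3: "B + C + Q = d" using H[rule_format, of "pi/2"] by simp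
  have e4: "B + C - Q = d" using H[rule_format, of "-(pi/2)"] by simp
  have s2: "sqrt 2 / 2 * (sqrt 2 / 2) = (1/2::real)" by simp
  have e5: "complex_of_real (1/2) * A + complex_of_real (1/2) * B + C + complex_of_real (1/2) * R
     + complex_of_real (sqrt 2 / 2) * P + complex_of_real (sqrt 2 / 2) * Q = d"
    using H[rule_format, of "pi/4"] by (simp only: cos_45 sin_45 s2)
  have "P = ((A + C + P) - (A + C - P)) / 2" by simp
  then have P: "P = 0" using e1 e2 by simp
  have "Q = ((B + C + Q) - (B + C - Q)) / 2" by simp
  then have Q: "Q = 0" using e3 e4 by simp
  have A: "A = d - C" using e1 P by (simp add: algebra_simps)
  have B: "B = d - C" using e3 Q by (simp add: algebra_simps)
  have "complex_of_real (1/2) * (d - C) + complex_of_real (1/2) * (d - C) + C + complex_of_real (1/2) * R = d"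
    using e5 A B P Q by simp
  moreover have "complex_of_real (1/2) * (d - C) + complex_of_real (1/2) * (d - C) + C = d"
    by (simp add: field_simps)
  ultimately have R: "R = 0" by simp
  show "A = B \<and> B = d - C \<and> R = 0 \<and> P = 0 \<and> Q = 0" using A B P Q R by simp
next
  assume H: "A = B \<and> B = d - C \<and> R = 0 \<and> P = 0 \<and> Q = 0"
  show "\<forall>\<phi>. ?E \<phi>"
  proof
    fix \<phi> :: real
    have "complex_of_real (cos \<phi> * cos \<phi>) * B + complex_of_real (sin \<phi> * sin \<phi>) * B
        = complex_of_real (cos \<phi> * cos \<phi> + sin \<phi> * sin \<phi>) * B" by (simp only: of_real_add distrib_right)
    also have "cos \<phi> * cos \<phi> + sin \<phi> * sin \<phi> = 1"
      using sin_cos_squared_add[of \<phi>] by (simp add: power2_eq_square)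
    finally have eq: "complex_of_real (cos \<phi> * cos \<phi>) * B + complex_of_real (sin \<phi> * sin \<phi>) * B = complex_of_real 1 * B" .
    from H have a: "A = B" and c: "C = d - B" and r: "R = 0" and p: "P = 0" and q: "Q = 0" by auto
    show "?E \<phi>" unfolding a c r p q using eq by (simp only: mult_zero_right add_0_right of_real_1 mult_1_left) simp
  qed
qed

lemma mat_Re_carrier: "M \<in> carrier_mat m m \<Longrightarrow> mat_Re M \<in> carrier_mat m m"
  unfolding mat_Re_def using adj_carrier[of M m] by simp

lemma eqm: "M \<in> carrier_mat m m \<Longrightarrow> N \<in> carrier_mat m m \<Longrightarrow>
   M = N \<longleftrightarrow> (\<forall>i<m. \<forall>j<m. M $$ (i,j) = N $$ (i,j))"
  by (auto intro!: eq_matI)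

theorem lemma3p1:
  fixes m :: nat and X Y Z :: "complex mat"
  assumes "X \<in> carrier_mat m m" "Y \<in> carrier_mat m m" "Z \<in> carrier_mat m m"
  shows "(\<forall>\<phi>::real. unitary m (complex_of_real (cos \<phi>) \<cdot>\<^sub>m X + complex_of_real (sin \<phi>) \<cdot>\<^sub>m Y + Z))
    \<longleftrightarrow> (adj X * X = adj Y * Y \<and> adj Y * Y = 1\<^sub>m m - adj Z * Z \<and>
         mat_Re (adj X * Y) = 0\<^sub>m m m \<and> mat_Re (adj X * Z) = 0\<^sub>m m m \<and> mat_Re (adj Y * Z) = 0\<^sub>m m m)"
proof -
  let ?U = "\<lambda>\<phi>::real. complex_of_real (cos \<phi>) \<cdot>\<^sub>m X + complex_of_real (sin \<phi>) \<cdot>\<^sub>m Y + Z"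
  let ?d = "\<lambda>i j. if i = j then (1::complex) else 0"
  let ?E = "\<lambda>\<phi> i j. complex_of_real (cos \<phi> * cos \<phi>) * G m X X i j + complex_of_real (sin \<phi> * sin \<phi>) * G m Y Y i j + G m Z Z i j
     + complex_of_real (cos \<phi> * sin \<phi>) * (G m X Y i j + G m Y X i j)
     + complex_of_real (cos \<phi>) * (G m X Z i j + G m Z X i j)
     + complex_of_real (sin \<phi>) * (G m Y Z i j + G m Z Y i j)"
  have Uc: "?U \<phi> \<in> carrier_mat m m" for \<phi> using assms by simp
  have L1: "unitary m (?U \<phi>) \<longleftrightarrow> (\<forall>i<m. \<forall>j<m. ?E \<phi> i j = ?d i j)" for \<phi>
  proof -
    have "unitary m (?U \<phi>) \<longleftrightarrow> adj (?U \<phi>) * ?U \<phi> = 1\<^sub>m m"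
      unfolding unitary_def using Uc[of \<phi>] adj_carrier[OF Uc[of \<phi>]] mat_mult_left_right_inverse by blast
    also have "\<dots> \<longleftrightarrow> (\<forall>i<m. \<forall>j<m. (adj (?U \<phi>) * ?U \<phi>) $$ (i,j) = 1\<^sub>m m $$ (i,j))"
      by (rule eqm) (use adj_carrier[OF Uc[of \<phi>]] Uc[of \<phi>] in auto)
    also have "\<dots> \<longleftrightarrow> (\<forall>i<m. \<forall>j<m. ?E \<phi> i j = ?d i j)"
    proof -
      have Uij: "(adj (?U \<phi>) * ?U \<phi>) $$ (i,j) = ?E \<phi> i j" "1\<^sub>m m $$ (i,j) = ?d i j"
        if "i < m" "j < m" for i j
        using U_idx[OF assms that] that by simp_all
      show ?thesis
      proof (intro iffI allI impI)
        fix i j assume H: "\<forall>i<m. \<forall>j<m. (adj (?U \<phi>) * ?U \<phi>) $$ (i,j) = 1\<^sub>m m $$ (i,j)" "i < m" "j < m"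
        then show "?E \<phi> i j = ?d i j" using Uij[OF H(2,3)] by metis
      next
        fix i j assume H: "\<forall>i<m. \<forall>j<m. ?E \<phi> i j = ?d i j" "i < m" "j < m"
        then show "(adj (?U \<phi>) * ?U \<phi>) $$ (i,j) = 1\<^sub>m m $$ (i,j)" using Uij[OF H(2,3)] by metis
      qed
    qed
    finally show ?thesis .
  qed
  have "(\<forall>\<phi>. unitary m (?U \<phi>)) \<longleftrightarrow> (\<forall>i<m. \<forall>j<m. \<forall>\<phi>. ?E \<phi> i j = ?d i j)"
    unfolding L1 by blast
  also have "\<dots> \<longleftrightarrow> (\<forall>i<m. \<forall>j<m. G m X X i j = G m Y Y i j \<and> G m Y Y i j = ?d i j - G m Z Z i j
      \<and> G m X Y i j + G m Y X i j = 0 \<and> G m X Z i j + G m Z X i j = 0 \<and> G m Y Z i j + G m Z Y i j = 0)"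
    by (simp only: scalar_lemma)
  finally have LHS: "(\<forall>\<phi>. unitary m (?U \<phi>)) \<longleftrightarrow> (\<forall>i<m. \<forall>j<m. G m X X i j = G m Y Y i j \<and> G m Y Y i j = ?d i j - G m Z Z i j
      \<and> G m X Y i j + G m Y X i j = 0 \<and> G m X Z i j + G m Z X i j = 0 \<and> G m Y Z i j + G m Z Y i j = 0)" .
  have aX: "adj X \<in> carrier_mat m m" "adj Y \<in> carrier_mat m m" "adj Z \<in> carrier_mat m m"
    using adj_carrier assms by auto
  have R1: "adj X * X = adj Y * Y \<longleftrightarrow> (\<forall>i<m. \<forall>j<m. G m X X i j = G m Y Y i j)"
    using aX assms by (subst eqm[of _ m]) (auto simp del: index_mult_mat(1) simp add: adj_mult_idx)
  have R2: "adj Y * Y = 1\<^sub>m m - adj Z * Z \<longleftrightarrow> (\<forall>i<m. \<forall>j<m. G m Y Y i j = ?d i j - G m Z Z i j)"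
    using aX assms by (subst eqm[of _ m]) (auto simp del: index_mult_mat(1) simp add: adj_mult_idx)
  have R3: "mat_Re (adj A * B) = 0\<^sub>m m m \<longleftrightarrow> (\<forall>i<m. \<forall>j<m. G m A B i j + G m B A i j = 0)"
    if "A \<in> carrier_mat m m" "B \<in> carrier_mat m m" for A B
  proof -
    have "adj A * B \<in> carrier_mat m m" using adj_carrier[OF that(1)] that(2) by simp
    then have "mat_Re (adj A * B) = 0\<^sub>m m m \<longleftrightarrow> (\<forall>i<m. \<forall>j<m. mat_Re (adj A * B) $$ (i,j) = 0\<^sub>m m m $$ (i,j))"
      by (intro eqm mat_Re_carrier) auto
    also have "\<dots> \<longleftrightarrow> (\<forall>i<m. \<forall>j<m. G m A B i j + G m B A i j = 0)"
      using that by (simp add: mat_Re_idx)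
    finally show ?thesis .
  qed
  show ?thesis unfolding LHS R1 R2 R3[OF assms(1,2)] R3[OF assms(1,3)] R3[OF assms(2,3)]
    by blast
qed

end
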